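(* Let $\langle E,\rightarrow\rangle$ be a computation in which some events are designated as local checkpoints, let $b$ be the conjunctive predicate that holds at a consistent cut iff, for every process, the last event of that process in the cut is a local checkpoint, and let $S$ be the slice of $\langle E,\rightarrow\rangle$ with respect to $b$. A set $X$ of local checkpoints can belong to the same consistent global snapshot (i.e., there is a non-trivial consistent cut of $\langle E,\rightarrow\rangle$ satisfying $b$ whose frontier contains $X$) if and only if every pair of (not necessarily distinct) elements of $X$ is consistent in $S$.
   Context: A computation is a directed graph $\langle E, \rightarrow\rangle$ whose vertices (events) are partitioned among processes, events on each process totally ordered, each process having an initial event (first) and final event (last), whose path relation contains Lamport's happened-before relation, with all initial events in one strongly connected component and all final events in one. $\top$ is the set of final events and $\mathrm{succ}(e)$ the successor of $e$ on its process. A vertex subset $C$ of a directed graph is a consistent cut if for every edge $(u,v)$, $v\in C$ implies $u\in C$. The frontier of a consistent cut $C$ is $\{e\in C \mid e\notin\top \Rightarrow \mathrm{succ}(e)\notin C\}$. Two events (possibly equal) are consistent in a graph if both belong to the frontier of some consistent cut of that graph. A conjunctive predicate is a conjunction of local predicates, each depending on one process and evaluated at the last event of that process in the cut. The slice with respect to $b$ is a directed graph on $E$ whose consistent cuts include every consistent cut of the computation satisfying $b$ and which has the fewest consistent cuts among all such graphs. *)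

theory Defs
  imports Main
begin

text \<open>A computation is given by: a finite event set E, the edge relation R of the
directed graph on E, a set P of processes, the map proc assigning each event its
process, the strict process order ord (e before f on the same process), and the
message relation M (used only to form Lamport's happened-before relation).\<close>

definition happened_before :: "('e \<times> 'e) set \<Rightarrow> ('e \<times> 'e) set \<Rightarrow> ('e \<times> 'e) set" where
  "happened_before ord M = (ord \<union> M)\<^sup>+"

definition initial_ev :: "'e set \<Rightarrow> ('e \<times> 'e) set \<Rightarrow> 'e \<Rightarrow> bool" where
  "initial_ev E ord e \<longleftrightarrow> e \<in> E \<and> \<not> (\<exists>f. (f, e) \<in> ord)"

definition final_ev :: "'e set \<Rightarrow> ('e \<times> 'e) set \<Rightarrow> 'e \<Rightarrow> bool" where
  "final_ev E ord e \<longleftrightarrow> e \<in> E \<and> \<not> (\<exists>f. (e, f) \<in> ord)"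

definition Top :: "'e set \<Rightarrow> ('e \<times> 'e) set \<Rightarrow> 'e set" where
  "Top E ord = {e. final_ev E ord e}"

definition succ_ev :: "('e \<times> 'e) set \<Rightarrow> 'e \<Rightarrow> 'e" where
  "succ_ev ord e = (THE f. (e, f) \<in> ord \<and> \<not> (\<exists>g. (e, g) \<in> ord \<and> (g, f) \<in> ord))"

definition computation ::
  "'e set \<Rightarrow> ('e \<times> 'e) set \<Rightarrow> 'p set \<Rightarrow> ('e \<Rightarrow> 'p) \<Rightarrow> ('e \<times> 'e) set \<Rightarrow> ('e \<times> 'e) set \<Rightarrow> bool" where
  "computation E R P proc ord M \<longleftrightarrow>
     finite E \<and> R \<subseteq> E \<times> E \<and> proc ` E = P \<and>
     ord \<subseteq> E \<times> E \<and> M \<subseteq> E \<times> E \<and>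
     (\<forall>e f. (e, f) \<in> ord \<longrightarrow> proc e = proc f) \<and>
     irrefl ord \<and> trans ord \<and>
     (\<forall>e\<in>E. \<forall>f\<in>E. proc e = proc f \<longrightarrow> e = f \<or> (e, f) \<in> ord \<or> (f, e) \<in> ord) \<and>
     happened_before ord M \<subseteq> R\<^sup>* \<and>
     (\<forall>e f. initial_ev E ord e \<and> initial_ev E ord f \<longrightarrow> (e, f) \<in> R\<^sup>*) \<and>
     (\<forall>e f. final_ev E ord e \<and> final_ev E ord f \<longrightarrow> (e, f) \<in> R\<^sup>*)"

definition consistent_cut :: "'e set \<Rightarrow> ('e \<times> 'e) set \<Rightarrow> 'e set \<Rightarrow> bool" where
  "consistent_cut E G C \<longleftrightarrow> C \<subseteq> E \<and> (\<forall>u v. (u, v) \<in> G \<longrightarrow> v \<in> C \<longrightarrow> u \<in> C)"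

definition frontier :: "'e set \<Rightarrow> ('e \<times> 'e) set \<Rightarrow> 'e set \<Rightarrow> 'e set" where
  "frontier E ord C = {e \<in> C. e \<notin> Top E ord \<longrightarrow> succ_ev ord e \<notin> C}"

definition consistent_in ::
  "'e set \<Rightarrow> ('e \<times> 'e) set \<Rightarrow> ('e \<times> 'e) set \<Rightarrow> 'e \<Rightarrow> 'e \<Rightarrow> bool" where
  "consistent_in E ord G e f \<longleftrightarrow>
     (\<exists>C. consistent_cut E G C \<and> e \<in> frontier E ord C \<and> f \<in> frontier E ord C)"

definition ckpt_pred ::
  "'p set \<Rightarrow> ('e \<Rightarrow> 'p) \<Rightarrow> ('e \<times> 'e) set \<Rightarrow> 'e set \<Rightarrow> 'e set \<Rightarrow> bool" where
  "ckpt_pred P proc ord LC C \<longleftrightarrow>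
     (\<forall>p\<in>P. \<exists>e\<in>C. proc e = p \<and> (\<forall>f\<in>C. proc f = p \<longrightarrow> f = e \<or> (f, e) \<in> ord) \<and> e \<in> LC)"

definition is_slice ::
  "'e set \<Rightarrow> ('e \<times> 'e) set \<Rightarrow> ('e set \<Rightarrow> bool) \<Rightarrow> ('e \<times> 'e) set \<Rightarrow> bool" where
  "is_slice E R b S \<longleftrightarrow>
     S \<subseteq> E \<times> E \<and>
     (\<forall>C. consistent_cut E R C \<and> b C \<longrightarrow> consistent_cut E S C) \<and>
     (\<forall>S'. S' \<subseteq> E \<times> E \<and> (\<forall>C. consistent_cut E R C \<and> b C \<longrightarrow> consistent_cut E S' C) \<longrightarrow>
        card {C. consistent_cut E S C} \<le> card {C. consistent_cut E S' C})"

end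

theory Submission
  imports Defs
begin

lemma ord_rtr:
  assumes "computation E R P proc ord M" "(a,b) \<in> ord"
  shows "(a,b) \<in> R\<^sup>*"
proof -
  have "(a,b) \<in> happened_before ord M" unfolding happened_before_def using assms(2) by auto
  thus ?thesis using assms(1) unfolding computation_def by auto
qed

lemma cut_down:
  assumes "consistent_cut E R C" "(a,b) \<in> R\<^sup>*" "b \<in> C"
  shows "a \<in> C"
  using assms(2,3)
proof (induction rule: converse_rtrancl_induct)
  case base then show ?case by simp
next
  case (step y z) then show ?case using assms(1) unfolding consistent_cut_def by blast
qed

lemma cut_down_ord:
  assumes "computation E R P proc ord M" "consistent_cut E R C" "(a,b) \<in> ord" "b \<in> C"
  shows "a \<in> C"
  using cut_down[OF assms(2) ord_rtr[OF assms(1,3)] assms(4)] .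

lemma succ_in:
  assumes c: "computation E R P proc ord M" and x: "x \<in> E" "x \<notin> Top E ord"
  shows "(x, succ_ev ord x) \<in> ord"
proof -
  have fin: "finite E" and oE: "ord \<subseteq> E \<times> E" and irr: "irrefl ord" and tr: "trans ord"
    and tot: "\<forall>e\<in>E. \<forall>f\<in>E. proc e = proc f \<longrightarrow> e = f \<or> (e, f) \<in> ord \<or> (f, e) \<in> ord"
    and pr: "\<forall>e f. (e, f) \<in> ord \<longrightarrow> proc e = proc f"
    using c unfolding computation_def by auto
  obtain f0 where f0: "(x,f0) \<in> ord" using x unfolding Top_def final_ev_def by auto
  have "finite ord" using fin oE by (meson finite_SigmaI finite_subset)
  moreover have "acyclic ord" using irr tr unfolding acyclic_def irrefl_def
    by (simp add: trancl_id)
  ultimately have wf: "wf ord" by (rule finite_acyclic_wf)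
  obtain f where f: "f \<in> {f. (x,f) \<in> ord}" and fm: "\<forall>y. (y,f) \<in> ord \<longrightarrow> y \<notin> {f. (x,f) \<in> ord}"
    using wfE_min[OF wf, of f0 "{f. (x,f) \<in> ord}"] f0 by blast
  have ex: "\<exists>!f. (x, f) \<in> ord \<and> \<not> (\<exists>g. (x, g) \<in> ord \<and> (g, f) \<in> ord)"
  proof (rule ex1I[of _ f])
    show "(x, f) \<in> ord \<and> \<not> (\<exists>g. (x, g) \<in> ord \<and> (g, f) \<in> ord)" using f fm by auto
  next
    fix g assume g: "(x, g) \<in> ord \<and> \<not> (\<exists>h. (x, h) \<in> ord \<and> (h, g) \<in> ord)"
    have "proc g = proc f" using pr g f by (metis mem_Collect_eq)
    moreover have "g \<in> E" "f \<in> E" using g f oE by auto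
    ultimately have "g = f \<or> (g,f) \<in> ord \<or> (f,g) \<in> ord" using tot by blast
    thus "g = f" using g f fm by auto
  qed
  show ?thesis unfolding succ_ev_def using theI'[OF ex] by blast
qed

lemma ckpt_un:
  assumes c: "computation E R P proc ord M"
    and C: "consistent_cut E R C" "ckpt_pred P proc ord LC C"
    and D: "consistent_cut E R D" "ckpt_pred P proc ord LC D"
  shows "ckpt_pred P proc ord LC (C \<union> D)"
  unfolding ckpt_pred_def
proof
  fix p assume p: "p \<in> P"
  have tr: "trans ord"
    and tot: "\<forall>e\<in>E. \<forall>f\<in>E. proc e = proc f \<longrightarrow> e = f \<or> (e, f) \<in> ord \<or> (f, e) \<in> ord"
    using c unfolding computation_def by auto
  obtain e1 where e1: "e1 \<in> C" "proc e1 = p" "\<forall>f\<in>C. proc f = p \<longrightarrow> f = e1 \<or> (f, e1) \<in> ord" "e1 \<in> LC"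
    using C(2) p unfolding ckpt_pred_def by blast
  obtain e2 where e2: "e2 \<in> D" "proc e2 = p" "\<forall>f\<in>D. proc f = p \<longrightarrow> f = e2 \<or> (f, e2) \<in> ord" "e2 \<in> LC"
    using D(2) p unfolding ckpt_pred_def by blast
  have "e1 \<in> E" "e2 \<in> E" using e1 e2 C(1) D(1) unfolding consistent_cut_def by auto
  then have "e1 = e2 \<or> (e1,e2) \<in> ord \<or> (e2,e1) \<in> ord" using tot e1 e2 by auto
  then show "\<exists>e\<in>C \<union> D. proc e = p \<and> (\<forall>f\<in>C \<union> D. proc f = p \<longrightarrow> f = e \<or> (f, e) \<in> ord) \<and> e \<in> LC"
  proof (elim disjE)
    assume "e1 = e2" then show ?thesis using e1 e2 by blast
  next
    assume h: "(e1,e2) \<in> ord"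
    show ?thesis apply (rule bexI[of _ e2]) using e1 e2 h tr unfolding trans_def by blast+
  next
    assume h: "(e2,e1) \<in> ord"
    show ?thesis apply (rule bexI[of _ e1]) using e1 e2 h tr unfolding trans_def by blast+
  qed
qed

lemma ckpt_int:
  assumes c: "computation E R P proc ord M"
    and C: "consistent_cut E R C" "ckpt_pred P proc ord LC C"
    and D: "consistent_cut E R D" "ckpt_pred P proc ord LC D"
  shows "ckpt_pred P proc ord LC (C \<inter> D)"
  unfolding ckpt_pred_def
proof
  fix p assume p: "p \<in> P"
  have tr: "trans ord"
    and tot: "\<forall>e\<in>E. \<forall>f\<in>E. proc e = proc f \<longrightarrow> e = f \<or> (e, f) \<in> ord \<or> (f, e) \<in> ord"
    using c unfolding computation_def by auto
  obtain e1 where e1: "e1 \<in> C" "proc e1 = p" "\<forall>f\<in>C. proc f = p \<longrightarrow> f = e1 \<or> (f, e1) \<in> ord" "e1 \<in> LC"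
    using C(2) p unfolding ckpt_pred_def by blast
  obtain e2 where e2: "e2 \<in> D" "proc e2 = p" "\<forall>f\<in>D. proc f = p \<longrightarrow> f = e2 \<or> (f, e2) \<in> ord" "e2 \<in> LC"
    using D(2) p unfolding ckpt_pred_def by blast
  have "e1 \<in> E" "e2 \<in> E" using e1 e2 C(1) D(1) unfolding consistent_cut_def by auto
  then have "e1 = e2 \<or> (e1,e2) \<in> ord \<or> (e2,e1) \<in> ord" using tot e1 e2 by auto
  then show "\<exists>e\<in>C \<inter> D. proc e = p \<and> (\<forall>f\<in>C \<inter> D. proc f = p \<longrightarrow> f = e \<or> (f, e) \<in> ord) \<and> e \<in> LC"
  proof (elim disjE)
    assume "e1 = e2" then show ?thesis using e1 e2 by blast
  next
    assume h: "(e1,e2) \<in> ord"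
    have "e1 \<in> D" using cut_down_ord[OF c D(1) h e2(1)] .
    show ?thesis apply (rule bexI[of _ e1]) using e1 e2 h \<open>e1 \<in> D\<close> by blast+
  next
    assume h: "(e2,e1) \<in> ord"
    have "e2 \<in> C" using cut_down_ord[OF c C(1) h e1(1)] .
    show ?thesis apply (rule bexI[of _ e2]) using e1 e2 h \<open>e2 \<in> C\<close> by blast+
  qed
qed

lemma closed_Inter:
  assumes "finite F" "F \<noteq> {}" "F \<subseteq> L" "\<And>A B. A \<in> L \<Longrightarrow> B \<in> L \<Longrightarrow> A \<inter> B \<in> L"
  shows "\<Inter>F \<in> L"
  using assms(1,2,3) by (induction F rule: finite_ne_induct) (auto intro: assms(4))

lemma closed_Union:
  assumes "finite F" "F \<noteq> {}" "F \<subseteq> L" "\<And>A B. A \<in> L \<Longrightarrow> B \<in> L \<Longrightarrow> A \<union> B \<in> L"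
  shows "\<Union>F \<in> L"
  using assms(1,2,3) by (induction F rule: finite_ne_induct) (auto intro: assms(4))

lemma slice_cuts:
  assumes c: "computation E R P proc ord M"
    and sl: "is_slice E R (ckpt_pred P proc ord LC) S"
  shows "{C. consistent_cut E S C} =
     {C. consistent_cut E R C \<and> ckpt_pred P proc ord LC C} \<union> {{}, E}"
proof -
  define B where "B = {C. consistent_cut E R C \<and> ckpt_pred P proc ord LC C}"
  define L where "L = B \<union> {{}, E}"
  have fin: "finite E" using c unfolding computation_def by auto
  have LE: "L \<subseteq> Pow E" unfolding L_def B_def consistent_cut_def by auto
  have finL: "finite L" using LE fin by (meson finite_Pow_iff finite_subset)
  have Bun: "A \<union> D \<in> B" if "A \<in> B" "D \<in> B" for A D
    using that ckpt_un[OF c] unfolding B_def consistent_cut_def by auto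
  have Bint: "A \<inter> D \<in> B" if "A \<in> B" "D \<in> B" for A D
    using that ckpt_int[OF c] unfolding B_def consistent_cut_def by auto
  have Lun: "A \<union> D \<in> L" if "A \<in> L" "D \<in> L" for A D
  proof -
    have "A \<subseteq> E" "D \<subseteq> E" using that LE by auto
    then show ?thesis using that Bun unfolding L_def
      by (auto simp: Un_absorb1 Un_absorb2)
  qed
  have Lint: "A \<inter> D \<in> L" if "A \<in> L" "D \<in> L" for A D
  proof -
    have "A \<subseteq> E" "D \<subseteq> E" using that LE by auto
    then show ?thesis using that Bint unfolding L_def
      by (auto simp: Int_absorb1 Int_absorb2)
  qed
  define S' where "S' = {(u,v). u \<in> E \<and> v \<in> E \<and> (\<forall>C\<in>L. v \<in> C \<longrightarrow> u \<in> C)}"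
  have S'E: "S' \<subseteq> E \<times> E" unfolding S'_def by auto
  have cutsS': "{C. consistent_cut E S' C} = L"
  proof
    show "L \<subseteq> {C. consistent_cut E S' C}"
      using LE unfolding consistent_cut_def S'_def by auto
  next
    show "{C. consistent_cut E S' C} \<subseteq> L"
    proof
      fix D assume "D \<in> {C. consistent_cut E S' C}"
      then have D: "consistent_cut E S' D" by simp
      show "D \<in> L"
      proof (cases "D = {}")
        case True then show ?thesis unfolding L_def by simp
      next
        case False
        define J where "J v = \<Inter>{C\<in>L. v \<in> C}" for v
        have JL: "J v \<in> L" if "v \<in> E" for v
          unfolding J_def
        proof (rule closed_Inter[OF _ _ _ Lint])
          show "finite {C \<in> L. v \<in> C}" using finL by simp
          show "{C \<in> L. v \<in> C} \<noteq> {}" using that unfolding L_def by blast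
        qed auto
        have DE: "D \<subseteq> E" using D unfolding consistent_cut_def by auto
        have "D = \<Union>(J ` D)"
        proof
          show "D \<subseteq> \<Union>(J ` D)" unfolding J_def by auto
        next
          show "\<Union>(J ` D) \<subseteq> D"
          proof
            fix u assume "u \<in> \<Union>(J ` D)"
            then obtain v where v: "v \<in> D" "u \<in> J v" by auto
            have "E \<in> L" unfolding L_def by simp
            then have "u \<in> E" using v DE unfolding J_def by auto
            moreover have "\<forall>C\<in>L. v \<in> C \<longrightarrow> u \<in> C" using v unfolding J_def by auto
            ultimately have "(u,v) \<in> S'" using v DE unfolding S'_def by auto
            then show "u \<in> D" using D v unfolding consistent_cut_def by auto
          qed
        qed
        moreover have "\<Union>(J ` D) \<in> L"
          apply (rule closed_Union[OF _ _ _ Lun])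
          using DE fin False JL by (auto intro: finite_subset)
        ultimately show ?thesis by simp
      qed
    qed
  qed
  have SE: "S \<subseteq> E \<times> E" and Bsub: "\<forall>C. consistent_cut E R C \<and> ckpt_pred P proc ord LC C \<longrightarrow> consistent_cut E S C"
    and mn: "\<forall>S'. S' \<subseteq> E \<times> E \<and> (\<forall>C. consistent_cut E R C \<and> ckpt_pred P proc ord LC C \<longrightarrow> consistent_cut E S' C) \<longrightarrow>
        card {C. consistent_cut E S C} \<le> card {C. consistent_cut E S' C}"
    using sl unfolding is_slice_def by auto
  have "\<forall>C. consistent_cut E R C \<and> ckpt_pred P proc ord LC C \<longrightarrow> consistent_cut E S' C"
    using cutsS' unfolding L_def B_def by blast
  then have le: "card {C. consistent_cut E S C} \<le> card L" using mn S'E cutsS' by metis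
  have sub: "L \<subseteq> {C. consistent_cut E S C}"
    using Bsub SE unfolding L_def B_def consistent_cut_def by auto
  have "finite {C. consistent_cut E S C}"
    by (rule finite_subset[of _ "Pow E"]) (auto simp: consistent_cut_def fin)
  then have "L = {C. consistent_cut E S C}" using card_seteq[OF _ sub le] by simp
  then show ?thesis unfolding L_def B_def by simp
qed

theorem theorem13:
  fixes E :: "'e set" and R ord M S :: "('e \<times> 'e) set"
    and P :: "'p set" and proc :: "'e \<Rightarrow> 'p" and LC X :: "'e set"
  assumes "computation E R P proc ord M"
    and "LC \<subseteq> E" and "LC \<inter> Top E ord = {}"
    and "is_slice E R (ckpt_pred P proc ord LC) S"
    and "X \<subseteq> LC" and "X \<noteq> {}"
  shows "(\<exists>C. consistent_cut E R C \<and> C \<noteq> {} \<and> C \<noteq> E \<and> ckpt_pred P proc ord LC C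
              \<and> X \<subseteq> frontier E ord C)
         \<longleftrightarrow> (\<forall>x\<in>X. \<forall>y\<in>X. consistent_in E ord S x y)"
proof
  assume "\<exists>C. consistent_cut E R C \<and> C \<noteq> {} \<and> C \<noteq> E \<and> ckpt_pred P proc ord LC C
              \<and> X \<subseteq> frontier E ord C"
  then obtain C where C: "consistent_cut E R C" "ckpt_pred P proc ord LC C" "X \<subseteq> frontier E ord C"
    by blast
  have "consistent_cut E S C" using C assms(4) unfolding is_slice_def by blast
  then show "\<forall>x\<in>X. \<forall>y\<in>X. consistent_in E ord S x y"
    using C(3) unfolding consistent_in_def by blast
next
  assume H: "\<forall>x\<in>X. \<forall>y\<in>X. consistent_in E ord S x y"
  define B where "B = {C. consistent_cut E R C \<and> ckpt_pred P proc ord LC C}"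
  have c: "computation E R P proc ord M" by fact
  have fin: "finite E" using c unfolding computation_def by auto
  have cuts: "{C. consistent_cut E S C} = B \<union> {{}, E}"
    using slice_cuts[OF c assms(4)] unfolding B_def .
  have XE: "X \<subseteq> E" and XT: "\<And>z. z \<in> X \<Longrightarrow> z \<notin> Top E ord" using assms(2,3,5) by auto
  have sE: "succ_ev ord z \<in> E" if "z \<in> X" for z
    using succ_in[OF c, of z] XE XT that c unfolding computation_def by blast
  have Bun: "A \<union> D \<in> B" if "A \<in> B" "D \<in> B" for A D
    using that ckpt_un[OF c] unfolding B_def consistent_cut_def by auto
  have Bint: "A \<inter> D \<in> B" if "A \<in> B" "D \<in> B" for A D
    using that ckpt_int[OF c] unfolding B_def consistent_cut_def by auto
  have "\<forall>x\<in>X. \<forall>y\<in>X. \<exists>C. consistent_cut E S C \<and> x \<in> frontier E ord C \<and> y \<in> frontier E ord C"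
    using H unfolding consistent_in_def by blast
  then obtain Cf where Cf: "\<And>x y. x \<in> X \<Longrightarrow> y \<in> X \<Longrightarrow>
      consistent_cut E S (Cf x y) \<and> x \<in> frontier E ord (Cf x y) \<and> y \<in> frontier E ord (Cf x y)"
    by metis
  have Cfr: "x \<in> Cf x y \<and> succ_ev ord x \<notin> Cf x y \<and> y \<in> Cf x y \<and> succ_ev ord y \<notin> Cf x y"
    if "x \<in> X" "y \<in> X" for x y
    using Cf[OF that] XT that unfolding frontier_def by auto
  have CfB: "Cf x y \<in> B" if "x \<in> X" "y \<in> X" for x y
  proof -
    have "Cf x y \<in> B \<union> {{}, E}" using Cf[OF that] cuts by blast
    moreover have "Cf x y \<noteq> {}" using Cfr[OF that] by auto
    moreover have "Cf x y \<noteq> E" using Cfr[OF that] sE[OF that(1)] by auto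
    ultimately show ?thesis by auto
  qed
  have finX: "finite X" using XE fin by (rule finite_subset)
  define D where "D x = \<Inter>((\<lambda>y. Cf x y) ` X)" for x
  have DB: "D x \<in> B" if "x \<in> X" for x
    unfolding D_def
    apply (rule closed_Inter[OF _ _ _ Bint])
    using finX assms(6) CfB that by auto
  define C where "C = \<Union>(D ` X)"
  have CB: "C \<in> B" unfolding C_def
    apply (rule closed_Union[OF _ _ _ Bun])
    using finX assms(6) DB by auto
  have XC: "X \<subseteq> C" unfolding C_def D_def using Cfr by blast
  have nsC: "succ_ev ord z \<notin> C" if "z \<in> X" for z
    unfolding C_def D_def using Cfr that by blast
  obtain x where x: "x \<in> X" using assms(6) by auto
  show "\<exists>C. consistent_cut E R C \<and> C \<noteq> {} \<and> C \<noteq> E \<and> ckpt_pred P proc ord LC C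
              \<and> X \<subseteq> frontier E ord C"
  proof (intro exI conjI)
    show "consistent_cut E R C" "ckpt_pred P proc ord LC C" using CB unfolding B_def by auto
    show "C \<noteq> {}" using XC x by auto
    show "C \<noteq> E" using nsC[OF x] sE[OF x] by auto
    show "X \<subseteq> frontier E ord C" using XC nsC unfolding frontier_def by auto
  qed
qed

end
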